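(* Let $A\in M_n(\mathbb{C})$ and $1\le m\le k\le n$. Then $$\|D^m\vee^kA\|=\frac{k!}{(k-m)!}\|A\|^{k-m}.$$
   Context: $\vee^kA$ denotes the $k$-th symmetric tensor power of $A$, i.e. the restriction of $A\otimes\cdots\otimes A$ ($k$ factors) to the symmetric subspace $\vee^k\mathbb{C}^n\subseteq\otimes^k\mathbb{C}^n$. $D^m\vee^k(A)(X^1,\ldots,X^m)=\frac{\partial^m}{\partial t_1\cdots\partial t_m}\big|_{t=0}\vee^k(A+t_1X^1+\cdots+t_mX^m)$. $\|\cdot\|$ is the operator (spectral) norm, and $\|D^m\vee^kA\|=\sup_{\|X^1\|=\cdots=\|X^m\|=1}\|D^m\vee^k(A)(X^1,\ldots,X^m)\|$. *)

theory Defs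
  imports "HOL-Analysis.Analysis"
begin

text \<open>Matrices in M_n(C) are represented as complex^'n^'n for a finite index type 'n
  (n = CARD('n)).  The operator (spectral) norm is the operator norm of x |-> A x on
  C^n with its Euclidean norm.\<close>

definition mat_opnorm :: "complex^'n^'n \<Rightarrow> real" where
  "mat_opnorm A = onorm (\<lambda>x. A *v x)"

text \<open>The k-fold tensor power of C^n: coordinates indexed by lists of length k
  over 'n.  Tensors are functions on 'n list, required to vanish off length-k lists.\<close>

definition tidx :: "nat \<Rightarrow> 'n::finite list set" where
  "tidx k = {is. length is = k}"

definition tnorm :: "nat \<Rightarrow> ('n::finite list \<Rightarrow> complex) \<Rightarrow> real" where
  "tnorm k v = sqrt (\<Sum>is\<in>tidx k. (cmod (v is))\<^sup>2)"

definition symtensor :: "nat \<Rightarrow> ('n::finite list \<Rightarrow> complex) \<Rightarrow> bool" where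
  "symtensor k v \<longleftrightarrow> (\<forall>is. length is \<noteq> k \<longrightarrow> v is = 0) \<and>
     (\<forall>is \<sigma>. length is = k \<longrightarrow> \<sigma> permutes {..<k} \<longrightarrow>
        v (map (\<lambda>l. is ! \<sigma> l) [0..<k]) = v is)"

definition tapply :: "nat \<Rightarrow> ('n::finite list \<Rightarrow> 'n list \<Rightarrow> complex) \<Rightarrow>
    ('n list \<Rightarrow> complex) \<Rightarrow> ('n list \<Rightarrow> complex)" where
  "tapply k T v = (\<lambda>is. if length is = k then (\<Sum>js\<in>tidx k. T is js * v js) else 0)"

text \<open>Operator norm of the restriction of T to the symmetric subspace
  (used for operators leaving the symmetric subspace invariant).\<close>

definition sym_opnorm :: "nat \<Rightarrow> ('n::finite list \<Rightarrow> 'n list \<Rightarrow> complex) \<Rightarrow> real" where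
  "sym_opnorm k T = Sup {tnorm k (tapply k T v) | v. symtensor k v \<and> tnorm k v = 1}"

definition tpow :: "nat \<Rightarrow> complex^'n^'n \<Rightarrow> 'n::finite list \<Rightarrow> 'n list \<Rightarrow> complex" where
  "tpow k M is js = (\<Prod>l<k. M $ (is ! l) $ (js ! l))"

definition partial :: "nat \<Rightarrow> ((nat \<Rightarrow> real) \<Rightarrow> complex) \<Rightarrow> (nat \<Rightarrow> real) \<Rightarrow> complex" where
  "partial j f t = vector_derivative (\<lambda>s. f (t(j := s))) (at (t j))"

fun mixed_partial :: "nat \<Rightarrow> ((nat \<Rightarrow> real) \<Rightarrow> complex) \<Rightarrow> (nat \<Rightarrow> real) \<Rightarrow> complex" where
  "mixed_partial 0 f = f"
| "mixed_partial (Suc m) f = partial (Suc m) (mixed_partial m f)"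

text \<open>D^m (tensor^k)(A)(X^1,...,X^m): entrywise the mixed partial derivative at t = 0 of
  the tensor power of A + t_1 X^1 + ... + t_m X^m.  Its restriction to the symmetric
  subspace is D^m (sym^k)(A)(X^1,...,X^m).\<close>

definition DTpow :: "nat \<Rightarrow> nat \<Rightarrow> complex^'n^'n \<Rightarrow> (nat \<Rightarrow> complex^'n^'n) \<Rightarrow>
    'n::finite list \<Rightarrow> 'n list \<Rightarrow> complex" where
  "DTpow m k A X is js =
     mixed_partial m (\<lambda>t. tpow k (A + (\<Sum>i\<in>{1..m}. t i *\<^sub>R X i)) is js) (\<lambda>_. 0)"

definition norm_D_sympow :: "nat \<Rightarrow> nat \<Rightarrow> complex^'n::finite^'n \<Rightarrow> real" where
  "norm_D_sympow m k A =
     Sup {sym_opnorm k (DTpow m k A X) | X. \<forall>i\<in>{1..m}. mat_opnorm (X i) = 1}"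

end

theory Submission
  imports Defs
begin


definition pe :: "nat set \<Rightarrow> 'g set \<Rightarrow> ('g \<Rightarrow> complex) \<Rightarrow> ('g \<Rightarrow> nat \<Rightarrow> nat) \<Rightarrow> (nat \<Rightarrow> real) \<Rightarrow> complex" where
  "pe I G c e t = (\<Sum>g\<in>G. c g * (\<Prod>i\<in>I. (complex_of_real (t i)) ^ (e g i)))"

lemma hvd_pow: "((\<lambda>s::real. c * (complex_of_real s) ^ n) has_vector_derivative (c * of_nat n * (complex_of_real x) ^ (n - 1))) (at x)"
  unfolding has_vector_derivative_def
  apply (rule derivative_eq_intros refl)+
  by (auto simp: fun_eq_iff scaleR_conv_of_real)

lemma partial_pe:
  assumes "finite I" "j \<in> I"
  shows "partial j (pe I G c e) = pe I G (\<lambda>g. c g * of_nat (e g j)) (\<lambda>g. (e g)(j := e g j - 1))"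
proof
  fix t
  define K where "K g = c g * (\<Prod>i\<in>I-{j}. (complex_of_real (t i)) ^ (e g i))" for g
  have eq: "pe I G c e (t(j := s)) = (\<Sum>g\<in>G. K g * (complex_of_real s) ^ (e g j))" for s
    unfolding pe_def K_def
    apply (rule sum.cong[OF refl])
    apply (subst prod.remove[OF assms])
    apply (subgoal_tac "(\<Prod>i\<in>I - {j}. complex_of_real ((t(j := s)) i) ^ e x i) = (\<Prod>i\<in>I - {j}. complex_of_real (t i) ^ e x i)")
     apply simp
    apply (rule prod.cong) by auto
  have "((\<lambda>s. pe I G c e (t(j := s))) has_vector_derivative
      (\<Sum>g\<in>G. K g * of_nat (e g j) * (complex_of_real (t j)) ^ (e g j - 1))) (at (t j))"
    unfolding eq by (rule has_vector_derivative_sum) (rule hvd_pow)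
  then have "partial j (pe I G c e) t = (\<Sum>g\<in>G. K g * of_nat (e g j) * (complex_of_real (t j)) ^ (e g j - 1))"
    unfolding partial_def by (rule vector_derivative_at)
  also have "\<dots> = pe I G (\<lambda>g. c g * of_nat (e g j)) (\<lambda>g. (e g)(j := e g j - 1)) t"
    unfolding pe_def K_def
    apply (rule sum.cong[OF refl])
    apply (subst prod.remove[OF assms])
    apply (subgoal_tac "(\<Prod>i\<in>I - {j}. complex_of_real (t i) ^ ((e x)(j := e x j - 1)) i) = (\<Prod>i\<in>I - {j}. complex_of_real (t i) ^ e x i)")
     apply simp
    apply (rule prod.cong) by auto
  finally show "partial j (pe I G c e) t = pe I G (\<lambda>g. c g * of_nat (e g j)) (\<lambda>g. (e g)(j := e g j - 1)) t" .
qed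

lemma mixed_pe:
  assumes "p \<le> m"
  shows "mixed_partial p (pe {1..m} G c e) =
    pe {1..m} G (\<lambda>g. c g * (\<Prod>i\<in>{1..p}. of_nat (e g i))) (\<lambda>g i. if i \<in> {1..p} then e g i - 1 else e g i)"
  using assms
proof (induction p)
  case 0
  then show ?case by simp
next
  case (Suc p)
  have "mixed_partial (Suc p) (pe {1..m} G c e) = partial (Suc p)
    (pe {1..m} G (\<lambda>g. c g * (\<Prod>i\<in>{1..p}. of_nat (e g i))) (\<lambda>g i. if i \<in> {1..p} then e g i - 1 else e g i))"
    using Suc by simp
  also have "\<dots> = pe {1..m} G (\<lambda>g. c g * (\<Prod>i\<in>{1..p}. of_nat (e g i)) * of_nat (e g (Suc p)))
     (\<lambda>g. (\<lambda>i. if i \<in> {1..p} then e g i - 1 else e g i)(Suc p := e g (Suc p) - 1))"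
    using Suc.prems by (subst partial_pe) auto
  also have "\<dots> = pe {1..m} G (\<lambda>g. c g * (\<Prod>i\<in>{1..Suc p}. of_nat (e g i))) (\<lambda>g i. if i \<in> {1..Suc p} then e g i - 1 else e g i)"
    by (rule arg_cong2[where f="pe {1..m} G"]) (auto simp: fun_eq_iff prod.cl_ivl_Suc mult.assoc)
  finally show ?case .
qed

definition tprod :: "nat \<Rightarrow> (nat \<Rightarrow> complex^'n^'n) \<Rightarrow> 'n::finite list \<Rightarrow> 'n list \<Rightarrow> complex" where
  "tprod k M is js = (\<Prod>l<k. M l $ (is ! l) $ (js ! l))"

definition GG :: "nat \<Rightarrow> nat \<Rightarrow> (nat \<Rightarrow> nat) set" where
  "GG m k = PiE {..<k} (\<lambda>_. {0..m})"

definition Mg :: "complex^'n^'n \<Rightarrow> (nat \<Rightarrow> complex^'n^'n) \<Rightarrow> (nat \<Rightarrow> nat) \<Rightarrow> nat \<Rightarrow> complex^'n^'n" where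
  "Mg A X g l = (if g l = 0 then A else X (g l))"

lemma finite_GG: "finite (GG m k)"
  unfolding GG_def by (auto intro: finite_PiE)

lemma prod_fiber_pow:
  assumes "g \<in> GG m k"
  shows "(\<Prod>l<k. (if g l = 0 then 1 else f (g l))) = (\<Prod>i\<in>{1..m}. (f i :: complex) ^ card {l\<in>{..<k}. g l = i})"
proof -
  have img: "g ` {..<k} \<subseteq> {0..m}" using assms unfolding GG_def by auto
  have "(\<Prod>l<k. (if g l = 0 then 1 else f (g l))) =
      (\<Prod>r\<in>{0..m}. \<Prod>l\<in>{l\<in>{..<k}. g l = r}. (if g l = 0 then 1 else f (g l)))"
    by (rule prod.group[symmetric]) (use img in auto)
  also have "\<dots> = (\<Prod>r\<in>{0..m}. (if r = 0 then 1 else f r ^ card {l\<in>{..<k}. g l = r}))"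
  proof (rule prod.cong[OF refl])
    fix r assume "r \<in> {0..m}"
    have "(\<Prod>l\<in>{l\<in>{..<k}. g l = r}. (if g l = 0 then 1 else f (g l))) = (\<Prod>l\<in>{l\<in>{..<k}. g l = r}. (if r = 0 then 1 else f r))"
      by (rule prod.cong) auto
    then show "(\<Prod>l\<in>{l\<in>{..<k}. g l = r}. (if g l = 0 then 1 else f (g l))) = (if r = 0 then 1 else f r ^ card {l\<in>{..<k}. g l = r})"
      by simp
  qed
  also have "\<dots> = (\<Prod>r\<in>{1..m}. f r ^ card {l\<in>{..<k}. g l = r})"
  proof -
    have "{0..m} = insert 0 {1..m}" by auto
    then show ?thesis by simp
  qed
  finally show ?thesis .
qed

lemma tpow_expand:
  "tpow k (A + (\<Sum>i\<in>{1..m}. t i *\<^sub>R X i)) is js =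
     pe {1..m} (GG m k) (\<lambda>g. tprod k (Mg A X g) is js) (\<lambda>g i. card {l\<in>{..<k}. g l = i}) t"
proof -
  define y where "y l r = (if r = 0 then A $ (is!l) $ (js!l) else complex_of_real (t r) * X r $ (is!l) $ (js!l))" for l r
  have fac: "(A + (\<Sum>i\<in>{1..m}. t i *\<^sub>R X i)) $ (is!l) $ (js!l) = (\<Sum>r\<in>{0..m}. y l r)" for l
  proof -
    have "{0..m} = insert 0 {1..m}" by auto
    then have "(\<Sum>r\<in>{0..m}. y l r) = y l 0 + (\<Sum>r\<in>{1..m}. y l r)" by simp
    also have "(\<Sum>r\<in>{1..m}. y l r) = (\<Sum>r\<in>{1..m}. complex_of_real (t r) * X r $ (is!l) $ (js!l))"
      by (rule sum.cong) (auto simp: y_def)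
    finally show ?thesis by (simp add: y_def) (simp add: scaleR_conv_of_real)
  qed
  have "tpow k (A + (\<Sum>i\<in>{1..m}. t i *\<^sub>R X i)) is js = (\<Prod>l<k. \<Sum>r\<in>{0..m}. y l r)"
    unfolding tpow_def fac ..
  also have "\<dots> = (\<Sum>g\<in>GG m k. \<Prod>l<k. y l (g l))"
    unfolding GG_def by (rule prod_sum_PiE) auto
  also have "\<dots> = pe {1..m} (GG m k) (\<lambda>g. tprod k (Mg A X g) is js) (\<lambda>g i. card {l\<in>{..<k}. g l = i}) t"
    unfolding pe_def
  proof (rule sum.cong[OF refl])
    fix g assume g: "g \<in> GG m k"
    have "(\<Prod>l<k. y l (g l)) = (\<Prod>l<k. Mg A X g l $ (is!l) $ (js!l) * (if g l = 0 then 1 else complex_of_real (t (g l))))"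
      by (rule prod.cong) (auto simp: y_def Mg_def)
    also have "\<dots> = tprod k (Mg A X g) is js * (\<Prod>l<k. (if g l = 0 then 1 else complex_of_real (t (g l))))"
      by (simp add: prod.distrib tprod_def)
    also have "\<dots> = tprod k (Mg A X g) is js * (\<Prod>i\<in>{1..m}. complex_of_real (t i) ^ card {l\<in>{..<k}. g l = i})"
      using prod_fiber_pow[OF g, of "\<lambda>i. complex_of_real (t i)"] by simp
    finally show "(\<Prod>l<k. y l (g l)) = tprod k (Mg A X g) is js * (\<Prod>i\<in>{1..m}. complex_of_real (t i) ^ card {l\<in>{..<k}. g l = i})" .
  qed
  finally show ?thesis .
qed

definition GG' :: "nat \<Rightarrow> nat \<Rightarrow> (nat \<Rightarrow> nat) set" where
  "GG' m k = {g \<in> GG m k. \<forall>i\<in>{1..m}. card {l\<in>{..<k}. g l = i} = 1}"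

lemma aux01: "of_nat n * (0::complex) ^ (n - 1) = (if n = 1 then 1 else 0)"
  by (cases n) (auto simp: power_0_left)

lemma DTpow_eq:
  "DTpow m k A X is js = (\<Sum>g\<in>GG' m k. tprod k (Mg A X g) is js)"
proof -
  have "DTpow m k A X is js = mixed_partial m (pe {1..m} (GG m k) (\<lambda>g. tprod k (Mg A X g) is js) (\<lambda>g i. card {l\<in>{..<k}. g l = i})) (\<lambda>_. 0)"
    unfolding DTpow_def tpow_expand by (rule refl)
  also have "\<dots> = (\<Sum>g\<in>GG m k. tprod k (Mg A X g) is js * (\<Prod>i\<in>{1..m}. of_nat (card {l\<in>{..<k}. g l = i})) *
       (\<Prod>i\<in>{1..m}. (0::complex) ^ (card {l\<in>{..<k}. g l = i} - 1)))"
    by (subst mixed_pe) (auto simp: pe_def intro!: sum.cong prod.cong)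
  also have "\<dots> = (\<Sum>g\<in>GG m k. if g \<in> GG' m k then tprod k (Mg A X g) is js else 0)"
  proof (rule sum.cong[OF refl])
    fix g assume g: "g \<in> GG m k"
    have "(\<Prod>i\<in>{1..m}. of_nat (card {l\<in>{..<k}. g l = i})) * (\<Prod>i\<in>{1..m}. (0::complex) ^ (card {l\<in>{..<k}. g l = i} - 1))
       = (\<Prod>i\<in>{1..m}. of_nat (card {l\<in>{..<k}. g l = i}) * (0::complex) ^ (card {l\<in>{..<k}. g l = i} - 1))"
      by (simp add: prod.distrib)
    also have "\<dots> = (\<Prod>i\<in>{1..m}. if card {l\<in>{..<k}. g l = i} = 1 then 1 else 0)"
      by (rule prod.cong[OF refl]) (rule aux01)
    also have "\<dots> = (if g \<in> GG' m k then 1 else 0)"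
      using g by (auto simp: GG'_def)
    finally show "tprod k (Mg A X g) is js * (\<Prod>i\<in>{1..m}. of_nat (card {l\<in>{..<k}. g l = i})) *
       (\<Prod>i\<in>{1..m}. (0::complex) ^ (card {l\<in>{..<k}. g l = i} - 1)) = (if g \<in> GG' m k then tprod k (Mg A X g) is js else 0)"
      by (simp add: mult.assoc)
  qed
  also have "\<dots> = (\<Sum>g\<in>GG' m k. tprod k (Mg A X g) is js)"
    by (simp add: sum.If_cases finite_GG GG'_def Int_def)
  finally show ?thesis .
qed

lemma finite_tidx: "finite (tidx k :: 'n::finite list set)"
proof -
  have "tidx k = {xs::'n list. set xs \<subseteq> UNIV \<and> length xs = k}" unfolding tidx_def by auto
  then show ?thesis using finite_lists_length_eq[of "UNIV::'n set" k] by simp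
qed

lemma tidx_0: "tidx 0 = {[]}" unfolding tidx_def by auto

lemma tidx_Suc: "tidx (Suc k) = (\<lambda>(a,is). a # is) ` (UNIV \<times> tidx k)"
  unfolding tidx_def by (auto simp: image_iff length_Suc_conv)

lemma sum_tidx_Suc: "(\<Sum>is\<in>tidx (Suc k). f is) = (\<Sum>a\<in>(UNIV::'n::finite set). \<Sum>is\<in>tidx k. f (a # is))"
proof -
  have inj: "inj_on (\<lambda>(a,is). a # is) (UNIV \<times> (tidx k :: 'n list set))" by (auto simp: inj_on_def)
  have "(\<Sum>is\<in>tidx (Suc k). f is) = (\<Sum>p\<in>UNIV \<times> (tidx k :: 'n list set). f ((\<lambda>(a,is). a # is) p))"
    unfolding tidx_Suc by (rule sum.reindex[OF inj, unfolded comp_def])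
  also have "\<dots> = (\<Sum>a\<in>(UNIV::'n set). \<Sum>is\<in>tidx k. f (a # is))"
    by (simp only: sum.cartesian_product) (simp add: split_def)
  finally show ?thesis .
qed

lemma sum_prod_tidx:
  "(\<Sum>js\<in>tidx k. \<Prod>l<k. F l (js ! l)) = (\<Prod>l<k. \<Sum>j\<in>(UNIV::'n::finite set). (F l j :: 'a::comm_semiring_1))"
proof (induction k arbitrary: F)
  case 0
  then show ?case by (simp add: tidx_0)
next
  case (Suc k)
  have "(\<Sum>js\<in>tidx (Suc k). \<Prod>l<Suc k. F l (js ! l)) = (\<Sum>a\<in>(UNIV::'n set). \<Sum>js\<in>tidx k. F 0 a * (\<Prod>l<k. F (Suc l) (js ! l)))"
    unfolding sum_tidx_Suc by (simp add: prod.lessThan_Suc_shift del: prod.lessThan_Suc)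
  also have "\<dots> = (\<Sum>a\<in>(UNIV::'n set). F 0 a) * (\<Prod>l<k. \<Sum>j\<in>(UNIV::'n set). F (Suc l) j)"
    by (simp add: sum_distrib_left[symmetric] Suc.IH[of "\<lambda>l j. F (Suc l) j"] sum_distrib_right)
  also have "\<dots> = (\<Prod>l<Suc k. \<Sum>j\<in>(UNIV::'n set). F l j)"
    by (simp add: prod.lessThan_Suc_shift del: prod.lessThan_Suc)
  finally show ?case .
qed

definition tn2 :: "nat \<Rightarrow> ('n::finite list \<Rightarrow> complex) \<Rightarrow> real" where
  "tn2 k v = (\<Sum>is\<in>tidx k. (cmod (v is))\<^sup>2)"

lemma tnorm_tn2: "tnorm k v = sqrt (tn2 k v)" unfolding tnorm_def tn2_def ..

lemma tn2_nonneg: "0 \<le> tn2 k v" unfolding tn2_def by (rule sum_nonneg) auto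

lemma norm_sq_vec: "(norm (x::complex^'n))\<^sup>2 = (\<Sum>a\<in>UNIV. (cmod (x $ a))\<^sup>2)"
  unfolding norm_vec_def L2_set_def by (simp add: sum_nonneg)

lemma tprod_Suc: "tprod (Suc k) M (a # is) (b # js) = M 0 $ a $ b * tprod k (\<lambda>l. M (Suc l)) is js"
  unfolding tprod_def by (simp add: prod.lessThan_Suc_shift del: prod.lessThan_Suc)

lemma tensor_bound:
  assumes "\<And>l x. l < k \<Longrightarrow> norm (M l *v x) \<le> c l * norm x" "\<And>l. l < k \<Longrightarrow> 0 \<le> c l"
  shows "tn2 k (tapply k (tprod k M) v) \<le> (\<Prod>l<k. c l)\<^sup>2 * tn2 k (v :: 'n::finite list \<Rightarrow> complex)"
  using assms
proof (induction k arbitrary: M c v)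
  case 0
  then show ?case by (simp add: tn2_def tidx_0 tapply_def tprod_def)
next
  case (Suc k)
  define M' where "M' l = M (Suc l)" for l
  define c' where "c' l = c (Suc l)" for l
  define vb where "vb b = (\<lambda>js. v (b # js))" for b
  define w where "w b = tapply k (tprod k M') (vb b)" for b
  define u where "u is = (\<chi> b. w b is)" for "is"
  have c'eq: "c' = (\<lambda>l. c (Suc l))" by (simp add: c'_def fun_eq_iff)
  have M'eq: "M' = (\<lambda>l. M (Suc l))" by (simp add: M'_def fun_eq_iff)
  have IH: "tn2 k (w b) \<le> (\<Prod>l<k. c' l)\<^sup>2 * tn2 k (vb b)" for b
    unfolding w_def by (rule Suc.IH) (use Suc.prems in \<open>auto simp: M'_def c'_def\<close>)
  have c0: "0 \<le> c 0" using Suc.prems by auto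
  have cp: "0 \<le> (\<Prod>l<k. c' l)" using Suc.prems by (auto simp: c'_def intro: prod_nonneg)
  have cl1: "tapply (Suc k) (tprod (Suc k) M) v (a # is) = (M 0 *v u is) $ a" if "is \<in> tidx k" for a "is"
  proof -
    have "tapply (Suc k) (tprod (Suc k) M) v (a # is) = (\<Sum>b\<in>UNIV. \<Sum>js\<in>tidx k. M 0 $ a $ b * (tprod k M' is js * v (b # js)))"
      using that by (simp add: tapply_def sum_tidx_Suc tprod_Suc M'eq mult.assoc) (simp add: tidx_def)
    also have "\<dots> = (\<Sum>b\<in>UNIV. M 0 $ a $ b * w b is)"
      using that by (simp add: w_def tapply_def tidx_def vb_def sum_distrib_left)
    also have "\<dots> = (M 0 *v u is) $ a"
      by (simp add: matrix_vector_mult_def u_def)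
    finally show ?thesis .
  qed
  have "tn2 (Suc k) (tapply (Suc k) (tprod (Suc k) M) v) = (\<Sum>a\<in>UNIV. \<Sum>is\<in>tidx k. (cmod ((M 0 *v u is) $ a))\<^sup>2)"
    unfolding tn2_def sum_tidx_Suc by (simp add: cl1)
  also have "\<dots> = (\<Sum>is\<in>tidx k. (norm (M 0 *v u is))\<^sup>2)"
    by (subst sum.swap) (simp add: norm_sq_vec)
  also have "\<dots> \<le> (\<Sum>is\<in>tidx k. (c 0)\<^sup>2 * (norm (u is))\<^sup>2)"
  proof (rule sum_mono)
    fix "is"
    have "norm (M 0 *v u is) \<le> c 0 * norm (u is)" using Suc.prems by auto
    then have "(norm (M 0 *v u is))\<^sup>2 \<le> (c 0 * norm (u is))\<^sup>2"
      by (rule power_mono) simp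
    then show "(norm (M 0 *v u is))\<^sup>2 \<le> (c 0)\<^sup>2 * (norm (u is))\<^sup>2" by (simp add: power_mult_distrib)
  qed
  also have "\<dots> = (c 0)\<^sup>2 * (\<Sum>b\<in>UNIV. tn2 k (w b))"
    by (simp add: sum_distrib_left[symmetric] norm_sq_vec u_def tn2_def) (rule disjI2, rule sum.swap)
  also have "\<dots> \<le> (c 0)\<^sup>2 * (\<Sum>b\<in>UNIV. (\<Prod>l<k. c' l)\<^sup>2 * tn2 k (vb b))"
    by (rule mult_left_mono) (auto intro: sum_mono IH)
  also have "\<dots> = (\<Prod>l<Suc k. c l)\<^sup>2 * tn2 (Suc k) v"
    by (simp add: tn2_def sum_tidx_Suc vb_def prod.lessThan_Suc_shift c'eq sum_distrib_left[symmetric] power_mult_distrib mult.assoc del: prod.lessThan_Suc)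
  finally show ?case .
qed

lemma bl_mv: "bounded_linear (\<lambda>x. (A::complex^'n^'m) *v x)"
proof -
  have "linear (\<lambda>x. A *v x)"
    by (rule linearI) (auto simp: matrix_vector_mult_def vec_eq_iff sum.distrib algebra_simps scaleR_sum_right)
  then show ?thesis using linear_conv_bounded_linear by blast
qed

lemma mat_opnorm_bound: "norm (A *v x) \<le> mat_opnorm A * norm x"
  unfolding mat_opnorm_def by (rule onorm[OF bl_mv])

lemma mat_opnorm_nonneg: "0 \<le> mat_opnorm A"
  unfolding mat_opnorm_def by (rule onorm_pos_le[OF bl_mv])

lemma tapply_sum: "tapply k (\<lambda>is js. \<Sum>g\<in>S. T g is js) v = (\<lambda>is. \<Sum>g\<in>S. tapply k (T g) v is)"
  by (auto simp: tapply_def fun_eq_iff sum_distrib_right intro: sum.swap)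

lemma tapply_scale: "tapply k (\<lambda>is js. C * T is js) v = (\<lambda>is. C * tapply k T v is)"
  by (auto simp: tapply_def fun_eq_iff sum_distrib_left mult.assoc)

lemma tnorm_L2: "tnorm k v = L2_set (\<lambda>is. cmod (v is)) (tidx k)"
  unfolding tnorm_def L2_set_def ..

lemma tnorm_add: "tnorm k (\<lambda>is. f is + h is) \<le> tnorm k f + tnorm k h"
proof -
  have "tnorm k (\<lambda>is. f is + h is) \<le> L2_set (\<lambda>is. cmod (f is) + cmod (h is)) (tidx k)"
    unfolding tnorm_L2 by (rule L2_set_mono) (auto intro: norm_triangle_ineq)
  also have "\<dots> \<le> tnorm k f + tnorm k h"
    unfolding tnorm_L2 by (rule L2_set_triangle_ineq)
  finally show ?thesis .
qed

lemma tnorm_zero: "tnorm k (\<lambda>is. 0) = 0" unfolding tnorm_def by simp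

lemma tnorm_sum: "finite S \<Longrightarrow> tnorm k (\<lambda>is. \<Sum>g\<in>S. f g is) \<le> (\<Sum>g\<in>S. tnorm k (f g))"
proof (induction S rule: finite_induct)
  case empty
  then show ?case by (simp add: tnorm_zero)
next
  case (insert x F)
  have "tnorm k (\<lambda>is. \<Sum>g\<in>insert x F. f g is) = tnorm k (\<lambda>is. f x is + (\<Sum>g\<in>F. f g is))"
    using insert by simp
  also have "\<dots> \<le> tnorm k (f x) + tnorm k (\<lambda>is. \<Sum>g\<in>F. f g is)"
    by (rule tnorm_add)
  also have "\<dots> \<le> tnorm k (f x) + (\<Sum>g\<in>F. tnorm k (f g))" using insert by simp
  finally show ?case using insert by simp
qed

lemma tnorm_scale: "tnorm k (\<lambda>is. C * f is) = cmod C * tnorm k f"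
  unfolding tnorm_def by (simp add: norm_mult power_mult_distrib sum_distrib_left[symmetric] real_sqrt_mult)

lemma tnorm_nonneg: "0 \<le> tnorm k v" unfolding tnorm_def by (simp add: sum_nonneg)

lemma GG'_sub: "GG' m k \<subseteq> GG m k" unfolding GG'_def by auto

lemma finite_GG': "finite (GG' m k)" using finite_subset[OF GG'_sub finite_GG] .

lemma card_zero_fib:
  assumes g: "g \<in> GG' m k"
  shows "card {l\<in>{..<k}. g l = 0} = k - m"
proof -
  have img: "g ` {..<k} \<subseteq> {0..m}" using g unfolding GG'_def GG_def by auto
  have "k = (\<Sum>l\<in>{..<k}. (1::nat))" by simp
  also have "\<dots> = (\<Sum>r\<in>{0..m}. \<Sum>l\<in>{l\<in>{..<k}. g l = r}. 1)"
    by (rule sum.group[symmetric]) (use img in auto)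
  also have "\<dots> = (\<Sum>r\<in>{0..m}. card {l\<in>{..<k}. g l = r})" by simp
  also have "\<dots> = card {l\<in>{..<k}. g l = 0} + (\<Sum>r\<in>{1..m}. card {l\<in>{..<k}. g l = r})"
  proof -
    have "{0..m} = insert 0 {1..m}" by auto
    then show ?thesis by simp
  qed
  also have "(\<Sum>r\<in>{1..m}. card {l\<in>{..<k}. g l = r}) = (\<Sum>r\<in>{1..m}. 1)"
    using g unfolding GG'_def by (intro sum.cong) auto
  finally show ?thesis by simp
qed

lemma prod_zero_fib:
  assumes g: "g \<in> GG' m k"
  shows "(\<Prod>l<k. if g l = 0 then z else 1) = (z::'a::comm_monoid_mult) ^ (k - m)"
proof -
  have "(\<Prod>l<k. if g l = 0 then z else 1) = (\<Prod>l\<in>{l\<in>{..<k}. g l = 0}. z)"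
    by (rule prod.inter_filter[symmetric]) simp
  then show ?thesis using card_zero_fib[OF g] by simp
qed

lemma term_bound:
  assumes g: "g \<in> GG' m k" and X: "\<forall>i\<in>{1..m}. mat_opnorm (X i) = 1"
  shows "tnorm k (tapply k (tprod k (Mg A X g)) v) \<le> mat_opnorm A ^ (k - m) * tnorm k v"
proof -
  define c where "c l = (if g l = 0 then mat_opnorm A else 1)" for l
  have gl: "l < k \<Longrightarrow> g l \<in> {0..m}" for l using g unfolding GG'_def GG_def by auto
  have "tn2 k (tapply k (tprod k (Mg A X g)) v) \<le> (\<Prod>l<k. c l)\<^sup>2 * tn2 k v"
  proof (rule tensor_bound)
    fix l x assume l: "l < k"
    show "norm (Mg A X g l *v x) \<le> c l * norm x"
    proof (cases "g l = 0")
      case True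
      then show ?thesis by (simp add: Mg_def c_def mat_opnorm_bound)
    next
      case False
      then have "g l \<in> {1..m}" using gl[OF l] by auto
      then have "mat_opnorm (X (g l)) = 1" using X by auto
      then show ?thesis using False mat_opnorm_bound[of "X (g l)" x] by (simp add: Mg_def c_def)
    qed
  next
    fix l show "0 \<le> c l" by (simp add: c_def mat_opnorm_nonneg)
  qed
  also have "(\<Prod>l<k. c l) = mat_opnorm A ^ (k - m)"
    unfolding c_def by (rule prod_zero_fib[OF g])
  finally have "tn2 k (tapply k (tprod k (Mg A X g)) v) \<le> (mat_opnorm A ^ (k - m))\<^sup>2 * tn2 k v" .
  then have "sqrt (tn2 k (tapply k (tprod k (Mg A X g)) v)) \<le> sqrt ((mat_opnorm A ^ (k - m))\<^sup>2 * tn2 k v)"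
    by (rule real_sqrt_le_mono)
  then show ?thesis
    by (simp add: tnorm_tn2 real_sqrt_mult mat_opnorm_nonneg)
qed

lemma DT_bound:
  assumes X: "\<forall>i\<in>{1..m}. mat_opnorm (X i) = 1"
  shows "tnorm k (tapply k (DTpow m k A X) v) \<le> real (card (GG' m k)) * mat_opnorm A ^ (k - m) * tnorm k v"
proof -
  have "DTpow m k A X = (\<lambda>is js. \<Sum>g\<in>GG' m k. tprod k (Mg A X g) is js)"
    by (simp add: fun_eq_iff DTpow_eq)
  then have "tnorm k (tapply k (DTpow m k A X) v) = tnorm k (\<lambda>is. \<Sum>g\<in>GG' m k. tapply k (tprod k (Mg A X g)) v is)"
    by (simp add: tapply_sum)
  also have "\<dots> \<le> (\<Sum>g\<in>GG' m k. tnorm k (tapply k (tprod k (Mg A X g)) v))"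
    by (rule tnorm_sum[OF finite_GG'])
  also have "\<dots> \<le> (\<Sum>g\<in>GG' m k. mat_opnorm A ^ (k - m) * tnorm k v)"
    by (rule sum_mono) (rule term_bound[OF _ X])
  finally show ?thesis by simp
qed

definition ptens :: "nat \<Rightarrow> complex^'n \<Rightarrow> 'n::finite list \<Rightarrow> complex" where
  "ptens k x is = (if length is = k then (\<Prod>l<k. x $ (is ! l)) else 0)"

lemma tapply_ptens: "tapply k (tprod k (\<lambda>_. Y)) (ptens k x) = ptens k (Y *v x)"
proof
  fix "is" :: "'a list"
  show "tapply k (tprod k (\<lambda>_. Y)) (ptens k x) is = ptens k (Y *v x) is"
  proof (cases "length is = k")
    case True
    have "tapply k (tprod k (\<lambda>_. Y)) (ptens k x) is = (\<Sum>js\<in>tidx k. \<Prod>l<k. Y $ (is ! l) $ (js ! l) * x $ (js ! l))"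
      using True by (auto simp: tapply_def tprod_def ptens_def tidx_def prod.distrib intro!: sum.cong)
    also have "\<dots> = (\<Prod>l<k. \<Sum>j\<in>UNIV. Y $ (is ! l) $ j * x $ j)"
      by (rule sum_prod_tidx)
    also have "\<dots> = ptens k (Y *v x) is"
      using True by (simp add: ptens_def matrix_vector_mult_def)
    finally show ?thesis .
  next
    case False
    then show ?thesis by (simp add: tapply_def ptens_def)
  qed
qed

lemma tnorm_ptens: "tnorm k (ptens k x) = norm x ^ k"
proof -
  have "tn2 k (ptens k x) = (\<Sum>is\<in>tidx k. \<Prod>l<k. (cmod (x $ (is ! l)))\<^sup>2)"
    by (auto simp: tn2_def ptens_def tidx_def prod_norm[symmetric] prod_power_distrib intro!: sum.cong)
  also have "\<dots> = (\<Prod>l<k. \<Sum>j\<in>UNIV. (cmod (x $ j))\<^sup>2)"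
    by (rule sum_prod_tidx)
  also have "\<dots> = ((norm x)\<^sup>2) ^ k" by (simp add: norm_sq_vec)
  also have "\<dots> = (norm x ^ k)\<^sup>2" by (metis power_mult mult.commute)
  finally show ?thesis by (simp add: tnorm_tn2)
qed

lemma symtensor_ptens: "symtensor k (ptens k x)"
  unfolding symtensor_def
proof (intro conjI allI impI)
  fix "is" :: "'a list" assume "length is \<noteq> k" then show "ptens k x is = 0" by (simp add: ptens_def)
next
  fix "is" :: "'a list" and \<sigma> assume len: "length is = k" and s: "\<sigma> permutes {..<k}"
  have "(\<Prod>l<k. x $ (map (\<lambda>l. is ! \<sigma> l) [0..<k] ! l)) = (\<Prod>l<k. x $ (is ! \<sigma> l))"
    by (rule prod.cong) auto
  also have "\<dots> = (\<Prod>l<k. x $ (is ! l))"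
    using prod.permute[OF s, of "\<lambda>l. x $ (is ! l)"] by (simp add: comp_def)
  finally show "ptens k x (map (\<lambda>l. is ! \<sigma> l) [0..<k]) = ptens k x is"
    using len by (simp add: ptens_def)
qed

lemma onorm_attained:
  fixes Y :: "complex^'n^'n"
  shows "\<exists>x. norm x = 1 \<and> norm (Y *v x) = mat_opnorm Y"
proof -
  let ?S = "sphere (0::complex^'n) 1"
  have ne: "?S \<noteq> {}"
  proof -
    obtain i :: 'n where True by blast
    have "axis i (1::complex) \<in> ?S" by (simp add: norm_axis_1)
    then show ?thesis by blast
  qed
  have cont: "continuous_on ?S (\<lambda>x. norm (Y *v x))"
    by (intro continuous_intros linear_continuous_on bl_mv)
  have "compact ((\<lambda>x. norm (Y *v x)) ` ?S)"
    by (rule compact_continuous_image[OF cont compact_sphere])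
  then obtain s where s: "s \<in> (\<lambda>x. norm (Y *v x)) ` ?S" and smax: "\<forall>t\<in>(\<lambda>x. norm (Y *v x)) ` ?S. t \<le> s"
    using compact_attains_sup[of "(\<lambda>x. norm (Y *v x)) ` ?S"] ne by blast
  then obtain x0 where x0: "norm x0 = 1" "s = norm (Y *v x0)" by auto
  have le: "mat_opnorm Y \<le> s"
    unfolding mat_opnorm_def
  proof (rule onorm_le)
    fix x :: "complex^'n"
    show "norm (Y *v x) \<le> s * norm x"
    proof (cases "x = 0")
      case True then show ?thesis by simp
    next
      case False
      then have nx: "norm x > 0" by simp
      have "norm (Y *v (inverse (norm x) *\<^sub>R x)) \<le> s"
        using smax nx by (auto simp: norm_scaleR)
      moreover have "Y *v (inverse (norm x) *\<^sub>R x) = inverse (norm x) *\<^sub>R (Y *v x)"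
        by (simp add: vec_eq_iff matrix_vector_mult_def scaleR_sum_right)
      ultimately have "inverse (norm x) * norm (Y *v x) \<le> s"
        using nx by (simp add: norm_scaleR)
      then show ?thesis using nx by (simp add: field_simps)
    qed
  qed
  have ge: "s \<le> mat_opnorm Y" using mat_opnorm_bound[of Y x0] x0 by simp
  show ?thesis using le ge x0 by (intro exI[of _ x0]) auto
qed



lemma fib1:
  assumes "g \<in> GG' m k" "i \<in> {1..m}"
  shows "\<exists>!l. l < k \<and> g l = i"
proof -
  have "card {l\<in>{..<k}. g l = i} = 1" using assms unfolding GG'_def by auto
  then obtain l0 where "{l\<in>{..<k}. g l = i} = {l0}" by (rule card_1_singletonE)
  then show ?thesis by (auto simp: set_eq_iff)
qed

definition psi :: "nat \<Rightarrow> nat \<Rightarrow> (nat \<Rightarrow> nat) \<Rightarrow> nat \<Rightarrow> nat" where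
  "psi m k g = (\<lambda>i. if i \<in> {1..m} then (THE l. l < k \<and> g l = i) else undefined)"

definition phi :: "nat \<Rightarrow> nat \<Rightarrow> (nat \<Rightarrow> nat) \<Rightarrow> nat \<Rightarrow> nat" where
  "phi m k f = (\<lambda>l. if l < k then (if l \<in> f ` {1..m} then the_inv_into {1..m} f l else 0) else undefined)"

lemma psi_props:
  assumes "g \<in> GG' m k" "i \<in> {1..m}"
  shows "psi m k g i < k" "g (psi m k g i) = i" "\<And>l. l < k \<Longrightarrow> g l = i \<Longrightarrow> psi m k g i = l"
proof -
  have u: "\<exists>!l. l < k \<and> g l = i" by (rule fib1[OF assms])
  have t: "psi m k g i < k \<and> g (psi m k g i) = i"
    unfolding psi_def using assms(2) theI'[OF u] by simp
  then show "psi m k g i < k" "g (psi m k g i) = i" by auto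
  fix l assume "l < k" "g l = i"
  then show "psi m k g i = l" using t u by blast
qed

lemma card_GG': "card (GG' m k) = card {f \<in> {1..m} \<rightarrow>\<^sub>E {..<k}. inj_on f {1..m}}"
proof -
  let ?I = "{1..m}" and ?F = "{f \<in> {1..m} \<rightarrow>\<^sub>E {..<k}. inj_on f {1..m}}"
  have GGmem: "g \<in> GG' m k \<longleftrightarrow> g \<in> PiE {..<k} (\<lambda>_. {0..m}) \<and> (\<forall>i\<in>?I. card {l\<in>{..<k}. g l = i} = 1)" for g
    unfolding GG'_def GG_def by auto
  have phifib: "l < k \<and> phi m k f l = i \<longleftrightarrow> l = f i" if f: "f \<in> ?F" and i: "i \<in> ?I" for f i l
  proof -
    have inj: "inj_on f ?I" and fi: "f i < k" using f i by (auto simp: PiE_iff)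
    show ?thesis
    proof
      assume "l < k \<and> phi m k f l = i"
      then have l: "l < k" and e: "phi m k f l = i" by auto
      show "l = f i"
      proof (cases "l \<in> f ` ?I")
        case True
        then obtain j where j: "j \<in> ?I" "l = f j" by auto
        then have "the_inv_into ?I f l = j" using inj by (simp add: the_inv_into_f_f)
        then show ?thesis using e l True j by (simp add: phi_def)
      next
        case False then show ?thesis using e l i by (simp add: phi_def)
      qed
    next
      assume "l = f i"
      then show "l < k \<and> phi m k f l = i" using fi i inj by (auto simp: phi_def the_inv_into_f_f)
    qed
  qed
  have "bij_betw (psi m k) (GG' m k) ?F"
  proof (rule bij_betw_byWitness[where f'="phi m k"])
    show "\<forall>g\<in>GG' m k. phi m k (psi m k g) = g"
    proof
      fix g assume g: "g \<in> GG' m k"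
      have inj: "inj_on (psi m k g) ?I"
        by (rule inj_onI) (metis psi_props(2)[OF g])
      show "phi m k (psi m k g) = g"
      proof
        fix l
        show "phi m k (psi m k g) l = g l"
        proof (cases "l < k")
          case False
          then show ?thesis using g unfolding GGmem by (auto simp: phi_def PiE_iff extensional_def)
        next
          case True
          have glr: "g l \<in> {0..m}" using g True unfolding GGmem by (auto simp: PiE_iff)
          show ?thesis
          proof (cases "g l = 0")
            case True': True
            have "l \<notin> psi m k g ` ?I"
            proof
              assume "l \<in> psi m k g ` ?I"
              then obtain i where "i \<in> ?I" "l = psi m k g i" by auto
              then show False using psi_props(2)[OF g] True' by fastforce
            qed
            then show ?thesis using True True' by (simp add: phi_def)
          next
            case False
            then have i: "g l \<in> ?I" using glr by auto
            have e: "psi m k g (g l) = l" using psi_props(3)[OF g i True refl] .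
            then have "l \<in> psi m k g ` ?I" using i by force
            moreover have "the_inv_into ?I (psi m k g) l = g l"
              using the_inv_into_f_f[OF inj i] e by simp
            ultimately show ?thesis using True by (simp add: phi_def)
          qed
        qed
      qed
    qed
    show "\<forall>f\<in>?F. psi m k (phi m k f) = f"
    proof
      fix f assume f: "f \<in> ?F"
      show "psi m k (phi m k f) = f"
      proof
        fix i
        show "psi m k (phi m k f) i = f i"
        proof (cases "i \<in> ?I")
          case False
          then have "psi m k (phi m k f) i = undefined" by (auto simp: psi_def)
          moreover have "f i = undefined" using f False by (intro PiE_arb[of f "{1..m}" "\<lambda>_. {..<k}"]) auto
          ultimately show ?thesis by simp
        next
          case True
          have "(THE l. l < k \<and> phi m k f l = i) = f i"
            by (rule the_equality) (use phifib[OF f True] in auto)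
          then show ?thesis using True by (simp add: psi_def)
        qed
      qed
    qed
    show "psi m k ` GG' m k \<subseteq> ?F"
    proof
      fix h assume "h \<in> psi m k ` GG' m k"
      then obtain g where g: "g \<in> GG' m k" and h: "h = psi m k g" by auto
      have "h \<in> ?I \<rightarrow>\<^sub>E {..<k}"
        using psi_props(1)[OF g] by (auto simp: h PiE_iff psi_def extensional_def)
      moreover have "inj_on h ?I"
        unfolding h by (rule inj_onI) (metis psi_props(2)[OF g])
      ultimately show "h \<in> ?F" by simp
    qed
    show "phi m k ` ?F \<subseteq> GG' m k"
    proof
      fix h assume "h \<in> phi m k ` ?F"
      then obtain f where f: "f \<in> ?F" and h: "h = phi m k f" by auto
      have inj: "inj_on f ?I" using f by auto
      have "h \<in> PiE {..<k} (\<lambda>_. {0..m})"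
        using the_inv_into_into[OF inj, of _ ?I]
        by (auto simp: h PiE_iff phi_def extensional_def)
      moreover have "card {l\<in>{..<k}. h l = i} = 1" if i: "i \<in> ?I" for i
      proof -
        have "{l\<in>{..<k}. h l = i} = {f i}" using phifib[OF f i] by (auto simp: h)
        then show ?thesis by simp
      qed
      ultimately show "h \<in> GG' m k" unfolding GGmem by blast
    qed
  qed
  then show ?thesis by (rule bij_betw_same_card)
qed

lemma prod_fact: "m \<le> k \<Longrightarrow> fact (k - m) * (\<Prod>j\<in>{0..<m}. (k - j)) = (fact k :: nat)"
proof (induction m)
  case 0 then show ?case by simp
next
  case (Suc m)
  have e1: "fact (Suc (k - Suc m)) = Suc (k - Suc m) * (fact (k - Suc m) :: nat)" by simp
  have "fact (k - m) = (k - m) * (fact (k - Suc m) :: nat)"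
    using e1 Suc.prems by (simp add: Suc_diff_Suc)
  moreover have "fact (k - m) * (\<Prod>j\<in>{0..<m}. (k - j)) = (fact k :: nat)"
    using Suc by simp
  ultimately have "fact (k - Suc m) * ((\<Prod>j\<in>{0..<m}. (k - j)) * (k - m)) = (fact k :: nat)"
    by (metis mult.assoc mult.commute)
  then show ?case by (simp add: prod.atLeast0_lessThan_Suc)
qed

lemma card_GG'_fact:
  assumes "m \<le> k"
  shows "real (card (GG' m k)) = fact k / fact (k - m)"
proof -
  have "card (GG' m k) = (\<Prod>j\<in>{0..<m}. (k - j))"
    unfolding card_GG' by (subst card_inj_on_subset_funcset) auto
  then have "fact (k - m) * card (GG' m k) = (fact k :: nat)" using prod_fact[OF assms] by simp
  then have "(fact (k - m) :: real) * real (card (GG' m k)) = fact k"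
    by (metis of_nat_fact of_nat_mult)
  then show ?thesis by (simp add: field_simps)
qed

lemma exists_unit_sym: "\<exists>v. symtensor k v \<and> tnorm k (v :: 'n::finite list \<Rightarrow> complex) = 1"
proof -
  obtain i :: 'n where True by blast
  have "norm (axis i (1::complex)) = 1" by (simp add: norm_axis_1)
  then show ?thesis using symtensor_ptens[of k "axis i 1"] tnorm_ptens[of k "axis i 1"] by auto
qed

lemma sym_opnorm_le:
  assumes "\<And>v. symtensor k v \<Longrightarrow> tnorm k v = 1 \<Longrightarrow> tnorm k (tapply k T v) \<le> B"
  shows "sym_opnorm k (T :: 'n::finite list \<Rightarrow> 'n list \<Rightarrow> complex) \<le> B"
  unfolding sym_opnorm_def
proof (rule cSup_least)
  obtain v :: "'n list \<Rightarrow> complex" where "symtensor k v" "tnorm k v = 1" using exists_unit_sym by blast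
  then show "{tnorm k (tapply k T v) |v. symtensor k v \<and> tnorm k v = 1} \<noteq> {}" by blast
next
  fix x assume "x \<in> {tnorm k (tapply k T v) |v. symtensor k v \<and> tnorm k v = 1}"
  then show "x \<le> B" using assms by blast
qed

lemma mat_opnorm_one: "mat_opnorm (mat 1 :: complex^'n^'n) = 1"
  unfolding mat_opnorm_def matrix_vector_mul_lid by (rule onorm_id)

lemma mat_opnorm_zero:
  assumes "mat_opnorm (A :: complex^'n^'n) = 0"
  shows "A = 0"
proof -
  have "\<forall>x. A *v x = 0" using assms onorm_eq_0[OF bl_mv] unfolding mat_opnorm_def by blast
  moreover have "(A *v axis j 1) $ i = A $ i $ j" for i j
  proof -
    have "(A *v axis j 1) $ i = (\<Sum>ja\<in>UNIV. A $ i $ ja * (if ja = j then 1 else 0))"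
      by (simp add: matrix_vector_mult_def axis_def)
    also have "\<dots> = (\<Sum>ja\<in>UNIV. if ja = j then A $ i $ ja else 0)"
      by (rule sum.cong) auto
    finally show ?thesis by simp
  qed
  ultimately show ?thesis by (simp add: vec_eq_iff)
qed

lemma exists_Y: "\<exists>Y :: complex^'n^'n. mat_opnorm Y = 1 \<and> A = mat_opnorm A *\<^sub>R Y"
proof (cases "mat_opnorm A = 0")
  case True
  then show ?thesis using mat_opnorm_zero[OF True] mat_opnorm_one by (intro exI[of _ "mat 1"]) simp
next
  case False
  then have a: "mat_opnorm A > 0" using mat_opnorm_nonneg[of A] by simp
  have "mat_opnorm (inverse (mat_opnorm A) *\<^sub>R A) = onorm (\<lambda>x. inverse (mat_opnorm A) *\<^sub>R (A *v x))"
    unfolding mat_opnorm_def by (rule arg_cong[where f=onorm]) (auto simp: fun_eq_iff vec_eq_iff matrix_vector_mult_def scaleR_sum_right)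
  also have "\<dots> = \<bar>inverse (mat_opnorm A)\<bar> * mat_opnorm A"
    unfolding mat_opnorm_def by (rule onorm_scaleR[OF bl_mv])
  also have "\<dots> = 1" using a by simp
  finally show ?thesis using a by (intro exI[of _ "inverse (mat_opnorm A) *\<^sub>R A"]) simp
qed

theorem theorem3p3:
  fixes A :: "complex^'n::finite^'n" and m k :: nat
  assumes "1 \<le> m" and "m \<le> k" and "k \<le> CARD('n)"
  shows "norm_D_sympow m k A = fact k / fact (k - m) * (mat_opnorm A) ^ (k - m)"
proof -
  define a where "a = mat_opnorm A"
  define N where "N = real (card (GG' m k))"
  define B where "B = N * a ^ (k - m)"
  have a0: "0 \<le> a" unfolding a_def by (rule mat_opnorm_nonneg)
  have N0: "0 \<le> N" unfolding N_def by simp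
  obtain Y :: "complex^'n^'n" where Y1: "mat_opnorm Y = 1" and AY: "A = a *\<^sub>R Y"
    using exists_Y[of A] unfolding a_def by blast
  define X0 where "X0 = (\<lambda>_::nat. Y)"
  have X0v: "\<forall>i\<in>{1..m}. mat_opnorm (X0 i) = 1" by (simp add: X0_def Y1)
  have tp: "tprod k (Mg A X0 g) is js = (complex_of_real a) ^ (k - m) * tprod k (\<lambda>_. Y) is js"
    if g: "g \<in> GG' m k" for g "is" js
  proof -
    have sc: "a *\<^sub>R (z::complex) = complex_of_real a * z" for z
      by (simp add: scaleR_conv_of_real)
    have "tprod k (Mg A X0 g) is js = (\<Prod>l<k. (if g l = 0 then complex_of_real a else 1) * Y $ (is ! l) $ (js ! l))"
      unfolding tprod_def by (rule prod.cong) (auto simp: Mg_def X0_def AY sc)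
    also have "\<dots> = (complex_of_real a) ^ (k - m) * tprod k (\<lambda>_. Y) is js"
      by (simp add: prod.distrib prod_zero_fib[OF g] tprod_def)
    finally show ?thesis .
  qed
  define C where "C = complex_of_real N * (complex_of_real a) ^ (k - m)"
  have DT0: "DTpow m k A X0 = (\<lambda>is js. C * tprod k (\<lambda>_. Y) is js)"
    by (auto simp: fun_eq_iff DTpow_eq tp sum_distrib_right[symmetric] C_def N_def mult.assoc)
  have cC: "cmod C = B" unfolding C_def B_def using a0 N0 by (simp add: norm_mult norm_power)
  obtain x :: "complex^'n" where x1: "norm x = 1" and Yx: "norm (Y *v x) = 1"
    using onorm_attained[of Y] Y1 by auto
  have v0s: "symtensor k (ptens k x)" by (rule symtensor_ptens)
  have v01: "tnorm k (ptens k x) = 1" by (simp add: tnorm_ptens x1)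
  have val0: "tnorm k (tapply k (DTpow m k A X0) (ptens k x)) = B"
    unfolding DT0 tapply_scale tapply_ptens tnorm_scale cC tnorm_ptens Yx by simp
  have upper: "sym_opnorm k (DTpow m k A X) \<le> B" if X: "\<forall>i\<in>{1..m}. mat_opnorm (X i) = 1" for X
  proof (rule sym_opnorm_le)
    fix v :: "'n list \<Rightarrow> complex" assume "symtensor k v" "tnorm k v = 1"
    then show "tnorm k (tapply k (DTpow m k A X) v) \<le> B"
      using DT_bound[OF X, of k A v] by (simp add: B_def N_def a_def)
  qed
  have sym0: "sym_opnorm k (DTpow m k A X0) = B"
    unfolding sym_opnorm_def
  proof (rule cSup_eq_maximum)
    show "B \<in> {tnorm k (tapply k (DTpow m k A X0) v) |v. symtensor k v \<and> tnorm k v = 1}"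
      using v0s v01 val0 by (intro CollectI exI[of _ "ptens k x"]) auto
  next
    fix y assume "y \<in> {tnorm k (tapply k (DTpow m k A X0) v) |v. symtensor k v \<and> tnorm k v = 1}"
    then obtain v where "y = tnorm k (tapply k (DTpow m k A X0) v)" "tnorm k v = 1" by blast
    then show "y \<le> B" using DT_bound[OF X0v, of k A v] by (simp add: B_def N_def a_def)
  qed
  have "norm_D_sympow m k A = B"
    unfolding norm_D_sympow_def
  proof (rule cSup_eq_maximum)
    show "B \<in> {sym_opnorm k (DTpow m k A X) |X. \<forall>i\<in>{1..m}. mat_opnorm (X i) = 1}"
      using X0v sym0 by (intro CollectI exI[of _ X0]) auto
  next
    fix y assume "y \<in> {sym_opnorm k (DTpow m k A X) |X. \<forall>i\<in>{1..m}. mat_opnorm (X i) = 1}"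
    then show "y \<le> B" using upper by auto
  qed
  then show ?thesis unfolding B_def N_def a_def using card_GG'_fact[OF assms(2)] by simp
qed

end
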